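(* Let $\mathcal G=(\mathcal V,\mathcal E)$ be a finite digraph with vertices $v_1,\dots,v_N$, run the synchronous dynamics described in the context, let $K=\min\{k\ge 1: w_i[k]=\text{True for all } i=1,\dots,N\}$ and set $\mathcal S_i^*=z_i[K]$. Then $K$ exists, and for every $i$, $\mathcal S_i^*$ is the vertex set of the strongly connected component of $\mathcal G$ containing $v_i$. Consequently, the distinct subgraphs among $(\mathcal S_i^*,(\mathcal S_i^*\times\mathcal S_i^* )\cap\mathcal E)$, $i=1,\dots,N$, are exactly the strongly connected components $\mathcal G_1,\dots,\mathcal G_m$ of $\mathcal G$: their vertex sets are pairwise disjoint, each is a maximal strongly connected subgraph, and $\bigcup_s\mathcal G_s=(\bigcup_s\mathcal V_s,\bigcup_s\mathcal E_s)$ has vertex set $\mathcal V$ and edge set contained in $\mathcal E$.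
   Context: For $v\in\mathcal V$, $\mathcal N^-_{v}=\{u:(u,v)\in\mathcal E\}$ is the set of in-neighbors of $v$. A strongly connected component (SCC) is a maximal set of vertices such that for any two of its vertices there is a directed path from each to the other (a single vertex counts as strongly connected to itself); the SCC as a subgraph has vertex set $\mathcal V_s$ and edge set $(\mathcal V_s\times\mathcal V_s)\cap\mathcal E$. The dynamics are run synchronously by all vertices at every time step $k=0,1,2,\dots$: initialize $x_i[0]=\{v_i\}$, $y_i[0]=1$, $z_i[0]=\emptyset$, $w_i[0]=\text{False}$, and for $k\ge 0$ set $x_i[k+1]=\bigcup_{v_j\in\mathcal N^-_{v_i}\cup\{v_i\}}x_j[k]$; $y_i[k+1]=\max\{\max_{v_j\in\mathcal N^-_{v_i}}|x_j[k]|,\ |x_i[k+1]|\}$ (the inner maximum is omitted if $\mathcal N^-_{v_i}=\emptyset$); $z_i[k+1]=\{v_j:\ y_i[k+1]=y_j[k]\ \text{and}\ v_j\in\bigcup_{v_l\in\mathcal N^-_{v_i}\cup\{v_i\}}x_l[k]\}$; $w_i[k+1]=\text{True}$ if $y_i[k+1]=y_i[k]$ and False otherwise. All vertices keep updating until every vertex has $w_i=\text{True}$. *)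

theory Defs
  imports Main
begin

definition in_nbrs :: "('a \<times> 'a) set \<Rightarrow> 'a \<Rightarrow> 'a set" where
  "in_nbrs E v = {u. (u, v) \<in> E}"

primrec xs :: "('a \<times> 'a) set \<Rightarrow> nat \<Rightarrow> 'a \<Rightarrow> 'a set" where
  "xs E 0 v = {v}"
| "xs E (Suc k) v = (\<Union>u \<in> in_nbrs E v \<union> {v}. xs E k u)"

primrec ys :: "('a \<times> 'a) set \<Rightarrow> nat \<Rightarrow> 'a \<Rightarrow> nat" where
  "ys E 0 v = 1"
| "ys E (Suc k) v =
     Max (insert (card (xs E (Suc k) v)) ((\<lambda>u. card (xs E k u)) ` in_nbrs E v))"

fun zs :: "('a \<times> 'a) set \<Rightarrow> nat \<Rightarrow> 'a \<Rightarrow> 'a set" where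
  "zs E 0 v = {}"
| "zs E (Suc k) v =
     {u. ys E (Suc k) v = ys E k u \<and> u \<in> (\<Union>l \<in> in_nbrs E v \<union> {v}. xs E k l)}"

fun ws :: "('a \<times> 'a) set \<Rightarrow> nat \<Rightarrow> 'a \<Rightarrow> bool" where
  "ws E 0 v = False"
| "ws E (Suc k) v = (ys E (Suc k) v = ys E k v)"

definition strongly_connected_set :: "'a set \<Rightarrow> ('a \<times> 'a) set \<Rightarrow> 'a set \<Rightarrow> bool" where
  "strongly_connected_set V E S \<longleftrightarrow>
     S \<noteq> {} \<and> S \<subseteq> V \<and> (\<forall>a\<in>S. \<forall>b\<in>S. (a, b) \<in> E\<^sup>*)"

definition is_scc :: "'a set \<Rightarrow> ('a \<times> 'a) set \<Rightarrow> 'a set \<Rightarrow> bool" where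
  "is_scc V E S \<longleftrightarrow> strongly_connected_set V E S \<and>
     (\<forall>S'. strongly_connected_set V E S' \<and> S \<subseteq> S' \<longrightarrow> S' = S)"

definition stop_time :: "'a set \<Rightarrow> ('a \<times> 'a) set \<Rightarrow> nat" where
  "stop_time V E = (LEAST k. k \<ge> 1 \<and> (\<forall>v\<in>V. ws E k v))"

end

theory Submission
  imports Defs
begin

lemma xs_self: "v \<in> xs E k v"
  by (induction k arbitrary: v) auto

lemma xs_step: "xs E k v \<subseteq> xs E (Suc k) v"
  by auto

lemma xs_mono: "k \<le> k' \<Longrightarrow> xs E k v \<subseteq> xs E k' v"
  using lift_Suc_mono_le[of "\<lambda>k. xs E k v", OF xs_step] by blast

lemma xs_sub_anc: "xs E k v \<subseteq> {u. (u,v) \<in> E\<^sup>*}"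
proof (induction k arbitrary: v)
  case 0 then show ?case by auto
next
  case (Suc k)
  show ?case
  proof
    fix w assume "w \<in> xs E (Suc k) v"
    then obtain u where u: "u \<in> in_nbrs E v \<union> {v}" "w \<in> xs E k u" by auto
    then have "(w,u) \<in> E\<^sup>*" using Suc by blast
    with u(1) show "w \<in> {u. (u,v) \<in> E\<^sup>*}"
      by (auto simp: in_nbrs_def intro: rtrancl_into_rtrancl)
  qed
qed

lemma anc_in_xs: "(u,v) \<in> E\<^sup>* \<Longrightarrow> \<exists>k. u \<in> xs E k v"
proof (induction rule: rtrancl_induct)
  case base
  then show ?case by (rule exI[of _ 0]) simp
next
  case (step y z)
  then obtain k where "u \<in> xs E k y" by blast
  moreover have "y \<in> in_nbrs E z" using step by (simp add: in_nbrs_def)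
  ultimately have "u \<in> xs E (Suc k) z" by auto
  then show ?case by blast
qed

lemma xs_subV: "E \<subseteq> V \<times> V \<Longrightarrow> v \<in> V \<Longrightarrow> xs E k v \<subseteq> V"
proof (induction k arbitrary: v)
  case 0 then show ?case by auto
next
  case (Suc k)
  have "in_nbrs E v \<subseteq> V" using Suc.prems by (auto simp: in_nbrs_def)
  then show ?case using Suc by auto
qed

lemma ys_card:
  assumes "finite V" "E \<subseteq> V \<times> V" "v \<in> V"
  shows "ys E k v = card (xs E k v)"
proof (cases k)
  case 0 then show ?thesis by simp
next
  case (Suc j)
  have nb: "in_nbrs E v \<subseteq> V" using assms by (auto simp: in_nbrs_def)
  have fin: "finite (xs E (Suc j) v)" using xs_subV[OF assms(2,3)] assms(1) finite_subset by blast
  have le: "\<forall>y\<in>insert (card (xs E (Suc j) v)) ((\<lambda>u. card (xs E j u)) ` in_nbrs E v).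
      y \<le> card (xs E (Suc j) v)"
  proof
    fix y assume "y \<in> insert (card (xs E (Suc j) v)) ((\<lambda>u. card (xs E j u)) ` in_nbrs E v)"
    then consider "y = card (xs E (Suc j) v)" | u where "u \<in> in_nbrs E v" "y = card (xs E j u)" by auto
    then show "y \<le> card (xs E (Suc j) v)"
    proof cases
      case 1 then show ?thesis by simp
    next
      case 2
      have "xs E j u \<subseteq> xs E (Suc j) v" using 2(1) by auto
      then show ?thesis using 2(2) card_mono[OF fin] by simp
    qed
  qed
  have "finite (insert (card (xs E (Suc j) v)) ((\<lambda>u. card (xs E j u)) ` in_nbrs E v))"
    using nb assms(1) finite_subset by blast
  then show ?thesis using Suc le by (simp only: ys.simps) (rule Max_eqI, auto)
qed

lemma stable:
  assumes "E \<subseteq> V \<times> V" "\<forall>v\<in>V. xs E (Suc K) v = xs E K v"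
  shows "\<forall>v\<in>V. xs E (K+m) v = xs E K v"
proof (induction m)
  case 0 then show ?case by simp
next
  case (Suc m)
  show ?case
  proof
    fix v assume v: "v \<in> V"
    have nb: "in_nbrs E v \<union> {v} \<subseteq> V" using assms v by (auto simp: in_nbrs_def)
    have "xs E (K + Suc m) v = (\<Union>u \<in> in_nbrs E v \<union> {v}. xs E (K+m) u)" by simp
    also have "\<dots> = (\<Union>u \<in> in_nbrs E v \<union> {v}. xs E K u)"
      using Suc nb by (intro SUP_cong) auto
    also have "\<dots> = xs E (Suc K) v" by simp
    also have "\<dots> = xs E K v" using assms v by blast
    finally show "xs E (K + Suc m) v = xs E K v" .
  qed
qed

lemma stable_anc:
  assumes "E \<subseteq> V \<times> V" "\<forall>v\<in>V. xs E (Suc K) v = xs E K v" "v \<in> V"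
  shows "xs E K v = {u. (u,v) \<in> E\<^sup>*}"
proof
  show "xs E K v \<subseteq> {u. (u,v) \<in> E\<^sup>*}" by (rule xs_sub_anc)
  show "{u. (u,v) \<in> E\<^sup>*} \<subseteq> xs E K v"
  proof
    fix u assume "u \<in> {u. (u,v) \<in> E\<^sup>*}"
    then obtain k where k: "u \<in> xs E k v" using anc_in_xs by (metis mem_Collect_eq)
    have "xs E k v \<subseteq> xs E (K+k) v" by (rule xs_mono) simp
    then have "u \<in> xs E (K+k) v" using k by (rule subsetD)
    moreover have "xs E (K+k) v = xs E K v" using stable[OF assms(1,2)] assms(3) by blast
    ultimately show "u \<in> xs E K v" by simp
  qed
qed

lemma exists_stop:
  assumes "finite V" "E \<subseteq> V \<times> V"
  shows "\<exists>k\<ge>1. \<forall>v\<in>V. ws E k v"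
proof (rule ccontr)
  assume nc: "\<not> ?thesis"
  define f where "f k = (\<Sum>v\<in>V. card (xs E k v))" for k
  have fin: "\<And>k v. v \<in> V \<Longrightarrow> finite (xs E k v)"
    using xs_subV[OF assms(2)] assms(1) finite_subset by blast
  have inc: "f k < f (Suc k)" for k
  proof -
    from nc obtain v where v: "v \<in> V" "\<not> ws E (Suc k) v" 
    proof -
      have "\<not> (\<forall>v\<in>V. ws E (Suc k) v)" using nc by (metis Suc_eq_plus1 le_add2)
      then show ?thesis using that by blast
    qed
    then have "ys E (Suc k) v \<noteq> ys E k v" by simp
    then have "card (xs E (Suc k) v) \<noteq> card (xs E k v)"
      using ys_card[OF assms v(1), of "Suc k"] ys_card[OF assms v(1), of k] by argo
    moreover have "card (xs E k v) \<le> card (xs E (Suc k) v)"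
      using card_mono[OF fin[OF v(1)] xs_step] .
    ultimately have "card (xs E k v) < card (xs E (Suc k) v)" by simp
    moreover have "\<forall>u\<in>V. card (xs E k u) \<le> card (xs E (Suc k) u)"
      using card_mono[OF fin xs_step] by blast
    ultimately show ?thesis unfolding f_def
      using sum_strict_mono_ex1[OF assms(1), of "\<lambda>u. card (xs E k u)" "\<lambda>u. card (xs E (Suc k) u)"] v(1) by blast
  qed
  have ge: "k \<le> f k" for k
  proof (induction k)
    case 0 then show ?case by simp
  next
    case (Suc k) then show ?case using inc[of k] by simp
  qed
  have bd: "f k \<le> card V * card V" for k
  proof -
    have "\<forall>v\<in>V. card (xs E k v) \<le> card V"
      using card_mono[OF assms(1) xs_subV[OF assms(2)]] by blast
    then have "(\<Sum>v\<in>V. card (xs E k v)) \<le> card V * card V"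
      using sum_bounded_above[of V "\<lambda>v. card (xs E k v)" "card V"] by simp
    then show ?thesis unfolding f_def .
  qed
  show False using ge[of "Suc (card V * card V)"] bd[of "Suc (card V * card V)"] by simp
qed

definition C :: "('a \<times> 'a) set \<Rightarrow> 'a \<Rightarrow> 'a set" where
  "C E v = {u. (u,v) \<in> E\<^sup>* \<and> (v,u) \<in> E\<^sup>*}"

lemma zs_K:
  assumes "finite V" "E \<subseteq> V \<times> V" "K \<ge> 1" "\<forall>v\<in>V. ws E K v" "v \<in> V"
  shows "zs E K v = C E v"
proof -
  obtain K' where K: "K = Suc K'" using assms(3) by (cases K) auto
  have fin: "\<And>k v. v \<in> V \<Longrightarrow> finite (xs E k v)"
    using xs_subV[OF assms(2)] assms(1) finite_subset by blast
  have st: "\<forall>v\<in>V. xs E (Suc K') v = xs E K' v"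
  proof
    fix u assume u: "u \<in> V"
    then have "ys E (Suc K') u = ys E K' u" using assms(4) K by (metis ws.simps(2))
    then have "card (xs E (Suc K') u) = card (xs E K' u)"
      using ys_card[OF assms(1,2) u] by metis
    then show "xs E (Suc K') u = xs E K' u"
      using card_subset_eq[OF fin[OF u] xs_step] by metis
  qed
  define A where "A w = {u. (u,w) \<in> E\<^sup>*}" for w
  have anc: "\<And>w. w \<in> V \<Longrightarrow> xs E K' w = A w"
    using stable_anc[OF assms(2) st] unfolding A_def by blast
  have AV: "A v \<subseteq> V" using anc[OF assms(5)] xs_subV[OF assms(2,5)] by blast
  have finA: "\<And>w. w \<in> V \<Longrightarrow> finite (A w)" using anc fin by metis
  have un: "(\<Union>l \<in> in_nbrs E v \<union> {v}. xs E K' l) = A v"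
  proof -
    have "(\<Union>l \<in> in_nbrs E v \<union> {v}. xs E K' l) = xs E (Suc K') v" by (simp only: xs.simps)
    also have "\<dots> = xs E K' v" using st assms(5) by blast
    finally show ?thesis using anc[OF assms(5)] by simp
  qed
  have yv: "ys E (Suc K') v = card (A v)"
    using ys_card[OF assms(1,2,5), of "Suc K'"] st assms(5) anc[OF assms(5)] by metis
  have "zs E K v = {u. ys E (Suc K') v = ys E K' u \<and> u \<in> (\<Union>l \<in> in_nbrs E v \<union> {v}. xs E K' l)}"
    unfolding K by (simp only: zs.simps)
  also have "\<dots> = {u. card (A v) = ys E K' u \<and> u \<in> A v}"
    unfolding un yv ..
  also have "\<dots> = {u. card (A v) = card (A u) \<and> u \<in> A v}"
  proof (intro Collect_cong)
    fix u
    show "(card (A v) = ys E K' u \<and> u \<in> A v) = (card (A v) = card (A u) \<and> u \<in> A v)"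
    proof (cases "u \<in> A v")
      case True
      then have "u \<in> V" using AV by blast
      then have "ys E K' u = card (A u)"
        using ys_card[OF assms(1,2)] anc by metis
      then show ?thesis by simp
    qed simp
  qed
  also have "\<dots> = C E v"
  proof (intro set_eqI iffI)
    fix u assume u: "u \<in> {u. card (A v) = card (A u) \<and> u \<in> A v}"
    have "A u \<subseteq> A v" using u unfolding A_def by (auto intro: rtrancl_trans)
    then have "A u = A v" using u card_subset_eq[OF finA[OF assms(5)]] by auto
    moreover have "v \<in> A v" unfolding A_def by simp
    ultimately have "(v,u) \<in> E\<^sup>*" unfolding A_def by blast
    then show "u \<in> C E v" using u unfolding C_def A_def by simp
  next
    fix u assume u: "u \<in> C E v"
    then have "A u = A v" unfolding A_def C_def by (auto intro: rtrancl_trans)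
    then show "u \<in> {u. card (A v) = card (A u) \<and> u \<in> A v}" using u unfolding A_def C_def by simp
  qed
  finally show ?thesis .
qed

lemma C_sub: assumes "E \<subseteq> V \<times> V" "v \<in> V" shows "C E v \<subseteq> V"
proof
  fix u assume "u \<in> C E v"
  then have "(v,u) \<in> E\<^sup>*" unfolding C_def by blast
  then show "u \<in> V"
  proof (cases rule: rtranclE)
    case base then show ?thesis using assms by simp
  next
    case (step y) then show ?thesis using assms by blast
  qed
qed

lemma C_self: "v \<in> C E v" unfolding C_def by simp

lemma C_eq: assumes "w \<in> C E v" shows "C E w = C E v"
proof -
  have wv: "(w,v) \<in> E\<^sup>*" "(v,w) \<in> E\<^sup>*" using assms unfolding C_def by blast+
  show ?thesis unfolding C_def
  proof (intro set_eqI iffI; clarsimp)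
    fix u assume "(u,w) \<in> E\<^sup>*" "(w,u) \<in> E\<^sup>*"
    then show "(u,v) \<in> E\<^sup>* \<and> (v,u) \<in> E\<^sup>*" using wv rtrancl_trans by metis
  next
    fix u assume "(u,v) \<in> E\<^sup>*" "(v,u) \<in> E\<^sup>*"
    then show "(u,w) \<in> E\<^sup>* \<and> (w,u) \<in> E\<^sup>*" using wv rtrancl_trans by metis
  qed
qed

lemma C_sc: assumes "E \<subseteq> V \<times> V" "v \<in> V" shows "strongly_connected_set V E (C E v)"
  unfolding strongly_connected_set_def
proof (intro conjI ballI)
  show "C E v \<noteq> {}" using C_self[of v E] by blast
  show "C E v \<subseteq> V" using C_sub[OF assms] .
  fix a b assume "a \<in> C E v" "b \<in> C E v"
  then have "(a,v) \<in> E\<^sup>*" "(v,b) \<in> E\<^sup>*" unfolding C_def by blast+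
  then show "(a,b) \<in> E\<^sup>*" by (rule rtrancl_trans)
qed

lemma C_max: assumes "strongly_connected_set V E S'" "C E v \<subseteq> S'" shows "S' = C E v"
proof
  show "C E v \<subseteq> S'" by fact
  have v: "v \<in> S'" using assms(2) C_self[of v E] by (rule subsetD)
  have pw: "\<forall>a\<in>S'. \<forall>b\<in>S'. (a, b) \<in> E\<^sup>*" using assms(1) unfolding strongly_connected_set_def by blast
  show "S' \<subseteq> C E v"
  proof
    fix s assume "s \<in> S'"
    then have "(s,v) \<in> E\<^sup>*" "(v,s) \<in> E\<^sup>*" using pw v by blast+
    then show "s \<in> C E v" unfolding C_def by blast
  qed
qed

lemma C_scc: assumes "E \<subseteq> V \<times> V" "v \<in> V" shows "is_scc V E (C E v)"
  unfolding is_scc_def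
proof (intro conjI allI impI)
  show "strongly_connected_set V E (C E v)" using C_sc[OF assms] .
  fix S' assume "strongly_connected_set V E S' \<and> C E v \<subseteq> S'"
  then show "S' = C E v" using C_max[of V E S' v] by blast
qed

lemma scc_C: assumes "E \<subseteq> V \<times> V" "is_scc V E S" shows "\<exists>v\<in>V. S = C E v"
proof -
  from assms(2) obtain v where v: "v \<in> S" "S \<subseteq> V" "\<forall>a\<in>S. \<forall>b\<in>S. (a,b) \<in> E\<^sup>*"
    unfolding is_scc_def strongly_connected_set_def by blast
  have sub: "S \<subseteq> C E v" using v unfolding C_def by blast
  have vV: "v \<in> V" using v by blast
  have max: "\<forall>S'. strongly_connected_set V E S' \<and> S \<subseteq> S' \<longrightarrow> S' = S"
    using assms(2) unfolding is_scc_def by blast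
  have "C E v = S" using max C_sc[OF assms(1) vV] sub by blast
  then show ?thesis using vV by blast
qed

theorem theorem1:
  fixes V :: "'a set" and E :: "('a \<times> 'a) set"
  assumes "finite V" and "E \<subseteq> V \<times> V"
  defines "K \<equiv> stop_time V E"
  shows "(\<exists>k\<ge>1. \<forall>v\<in>V. ws E k v)
    \<and> (\<forall>v\<in>V. v \<in> zs E K v \<and> is_scc V E (zs E K v))
    \<and> {(zs E K v, (zs E K v \<times> zs E K v) \<inter> E) | v. v \<in> V}
        = {(S, (S \<times> S) \<inter> E) | S. is_scc V E S}
    \<and> (\<forall>u\<in>V. \<forall>v\<in>V. zs E K u = zs E K v \<or> zs E K u \<inter> zs E K v = {})
    \<and> (\<forall>v\<in>V. \<forall>S'. strongly_connected_set V E S' \<and> zs E K v \<subseteq> S' \<longrightarrow> S' = zs E K v)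
    \<and> (\<Union>v\<in>V. zs E K v) = V
    \<and> (\<Union>v\<in>V. (zs E K v \<times> zs E K v) \<inter> E) \<subseteq> E"
proof -
  have ex: "\<exists>k\<ge>1. \<forall>v\<in>V. ws E k v" using exists_stop[OF assms(1,2)] .
  have K: "K \<ge> 1 \<and> (\<forall>v\<in>V. ws E K v)"
    unfolding K_def stop_time_def using LeastI_ex[OF ex] by simp
  have Z: "\<forall>v\<in>V. zs E K v = C E v" using zs_K[OF assms(1,2)] K by blast
  have 1: "\<forall>v\<in>V. v \<in> zs E K v \<and> is_scc V E (zs E K v)"
    using Z C_self C_scc[OF assms(2)] by (simp add: C_self)
  have 2: "{(zs E K v, (zs E K v \<times> zs E K v) \<inter> E) | v. v \<in> V}
        = {(S, (S \<times> S) \<inter> E) | S. is_scc V E S}"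
  proof (intro set_eqI iffI)
    fix p assume "p \<in> {(zs E K v, (zs E K v \<times> zs E K v) \<inter> E) | v. v \<in> V}"
    then show "p \<in> {(S, (S \<times> S) \<inter> E) | S. is_scc V E S}" using 1 by blast
  next
    fix p assume "p \<in> {(S, (S \<times> S) \<inter> E) | S. is_scc V E S}"
    then obtain S where "p = (S, (S \<times> S) \<inter> E)" "is_scc V E S" by blast
    moreover then obtain v where "v \<in> V" "S = C E v" using scc_C[OF assms(2)] by blast
    ultimately show "p \<in> {(zs E K v, (zs E K v \<times> zs E K v) \<inter> E) | v. v \<in> V}"
      using Z by auto
  qed
  have 3: "\<forall>u\<in>V. \<forall>v\<in>V. zs E K u = zs E K v \<or> zs E K u \<inter> zs E K v = {}"
    using Z C_eq by (metis disjoint_iff)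
  have 4: "\<forall>v\<in>V. \<forall>S'. strongly_connected_set V E S' \<and> zs E K v \<subseteq> S' \<longrightarrow> S' = zs E K v"
    using Z C_max by metis
  have 5: "(\<Union>v\<in>V. zs E K v) = V"
    using Z C_self C_sub[OF assms(2)] by (auto simp: C_self)
  show ?thesis using ex 1 2 3 4 5 by blast
qed

end
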